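(* Let $H\subseteq G$ be simple groups, and assume $G$ is co-hopfian. Then the inclusion $H\subseteq G$ is a localization if and only if the following three conditions hold: (1) there is an injective homomorphism $j\colon\mathrm{Aut}(H)\to\mathrm{Aut}(G)$ with $j(c_h)=c_h^{G}$ for all $h\in H$; (2) for every subgroup $K\subseteq G$ isomorphic to $H$ there is $\beta\in\mathrm{Aut}(G)$ with $\beta(K)=H$; (3) the only automorphism of $G$ whose restriction to $H$ is the identity of $H$ is $\mathrm{id}_G$ (i.e. the centralizer of $H$ in $\mathrm{Aut}(G)$ is trivial).
   Context: A group homomorphism $i\colon H\to G$ is a localization if for every homomorphism $\varphi\colon H\to G$ there exists a unique homomorphism $\psi\colon G\to G$ with $\psi\circ i=\varphi$; for $H\subseteq G$, "$H\subseteq G$ is a localization" means the inclusion map is a localization. A group is co-hopfian if every injective endomorphism of it is an automorphism. For a group $X$ and $x\in X$, $c_x$ denotes the inner automorphism $y\mapsto x^{-1}yx$ of $X$. For $H\subseteq G$ and $h\in H$, $c_h$ denotes conjugation by $h$ on $H$ and $c_h^{G}$ denotes conjugation by $h$ on $G$. *)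

theory Defs
  imports "HOL-Algebra.Algebra"
begin

text \<open>Simple group (possibly infinite). The library locale simple_group requires
  order G > 1, which excludes infinite groups, so we use this definition instead.\<close>
definition simple_grp :: "('a, 'b) monoid_scheme \<Rightarrow> bool" where
  "simple_grp G \<longleftrightarrow> group G \<and> carrier G \<noteq> {\<one>\<^bsub>G\<^esub>} \<and>
     (\<forall>N. N \<lhd> G \<longrightarrow> N = carrier G \<or> N = {\<one>\<^bsub>G\<^esub>})"

definition co_hopfian :: "('a, 'b) monoid_scheme \<Rightarrow> bool" where
  "co_hopfian G \<longleftrightarrow> (\<forall>f \<in> hom G G. inj_on f (carrier G) \<longrightarrow> f ` carrier G = carrier G)"

definition inner_aut :: "('a, 'b) monoid_scheme \<Rightarrow> 'a \<Rightarrow> ('a \<Rightarrow> 'a)" where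
  "inner_aut G x = (\<lambda>y \<in> carrier G. inv\<^bsub>G\<^esub> x \<otimes>\<^bsub>G\<^esub> y \<otimes>\<^bsub>G\<^esub> x)"

definition localization_incl :: "('a, 'b) monoid_scheme \<Rightarrow> 'a set \<Rightarrow> bool" where
  "localization_incl G H \<longleftrightarrow>
     (\<forall>\<phi> \<in> hom (G\<lparr>carrier := H\<rparr>) G.
        \<exists>\<psi> \<in> hom G G. (\<forall>h \<in> H. \<psi> h = \<phi> h) \<and>
          (\<forall>\<psi>' \<in> hom G G. (\<forall>h \<in> H. \<psi>' h = \<phi> h) \<longrightarrow> (\<forall>x \<in> carrier G. \<psi>' x = \<psi> x)))"

end

theory Submission
  imports Defs
begin

lemma simple_grp_group: "simple_grp G \<Longrightarrow> group G"
  by (simp add: simple_grp_def)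

lemma simple_dich:
  fixes M :: "('a,'b) monoid_scheme" and G :: "('c,'d) monoid_scheme"
  assumes "simple_grp M" "group G" "f \<in> hom M G"
  shows "(\<forall>x\<in>carrier M. f x = \<one>\<^bsub>G\<^esub>) \<or> inj_on f (carrier M)"
proof -
  have gX: "group M" using assms(1) by (simp add: simple_grp_def)
  interpret gh: group_hom M G f using gX assms(2,3) by (simp add: group_hom_def group_hom_axioms_def)
  have "kernel M G f \<lhd> M" by (rule gh.normal_kernel)
  then have "kernel M G f = carrier M \<or> kernel M G f = {\<one>\<^bsub>M\<^esub>}"
    using assms(1) by (simp add: simple_grp_def)
  then show ?thesis
  proof
    assume "kernel M G f = carrier M"
    then show ?thesis by (auto simp: kernel_def)
  next
    assume "kernel M G f = {\<one>\<^bsub>M\<^esub>}"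
    then show ?thesis using gh.trivial_ker_imp_inj by blast
  qed
qed

lemma cohop_auto:
  assumes "group G" "co_hopfian G" "f \<in> hom G G" "inj_on f (carrier G)"
  shows "bij_betw f (carrier G) (carrier G)" "restrict f (carrier G) \<in> auto G"
proof -
  have "f ` carrier G = carrier G" using assms(2,3,4) unfolding co_hopfian_def by blast
  then show b: "bij_betw f (carrier G) (carrier G)" using assms(4) unfolding bij_betw_def by blast
  have "restrict f (carrier G) \<in> hom G G"
    by (rule group.hom_restrict[OF assms(1) assms(3)]) simp
  moreover have "restrict f (carrier G) \<in> Bij (carrier G)"
    unfolding Bij_def using b by simp
  ultimately show "restrict f (carrier G) \<in> auto G" unfolding auto_def by blast
qed

lemma (in group) inner_aut_auto:
  assumes "x \<in> carrier G"
  shows "inner_aut G x \<in> auto G"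
proof -
  have x: "x \<in> carrier G" "inv x \<in> carrier G" using assms(1) by auto
  have c1: "\<And>w. w \<in> carrier G \<Longrightarrow> x \<otimes> (inv x \<otimes> w) = w"
    using x by (simp add: m_assoc[symmetric])
  have c2: "\<And>w. w \<in> carrier G \<Longrightarrow> inv x \<otimes> (x \<otimes> w) = w"
    using x by (simp add: m_assoc[symmetric])
  have h: "inner_aut G x \<in> hom G G"
  proof (rule homI)
    fix y assume "y \<in> carrier G" then show "inner_aut G x y \<in> carrier G"
      using x by (simp add: inner_aut_def)
  next
    fix y z assume yz: "y \<in> carrier G" "z \<in> carrier G"
    have "inv x \<otimes> (y \<otimes> z) \<otimes> x = inv x \<otimes> y \<otimes> (x \<otimes> inv x) \<otimes> z \<otimes> x"
      using x yz by (simp add: m_assoc c1 c2)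
    also have "\<dots> = (inv x \<otimes> y \<otimes> x) \<otimes> (inv x \<otimes> z \<otimes> x)"
      using x yz by (simp add: m_assoc c1 c2)
    finally show "inner_aut G x (y \<otimes> z) = inner_aut G x y \<otimes> inner_aut G x z"
      using x yz by (simp add: inner_aut_def)
  qed
  have "bij_betw (inner_aut G x) (carrier G) (carrier G)"
  proof (rule bij_betwI[where g="inner_aut G (inv x)"])
    show "inner_aut G x \<in> carrier G \<rightarrow> carrier G" "inner_aut G (inv x) \<in> carrier G \<rightarrow> carrier G"
      using x by (auto simp: inner_aut_def)
  next
    fix y assume y: "y \<in> carrier G"
    have "inv (inv x) \<otimes> (inv x \<otimes> y \<otimes> x) \<otimes> inv x = (x \<otimes> inv x) \<otimes> y \<otimes> (x \<otimes> inv x)"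
      using x y by (simp add: m_assoc c1 c2)
    then show "inner_aut G (inv x) (inner_aut G x y) = y"
      using x y by (simp add: inner_aut_def)
    have "inv x \<otimes> (inv (inv x) \<otimes> y \<otimes> inv x) \<otimes> x = (inv x \<otimes> x) \<otimes> y \<otimes> (inv x \<otimes> x)"
      using x y by (simp add: m_assoc c1 c2)
    then show "inner_aut G x (inner_aut G (inv x) y) = y"
      using x y by (simp add: inner_aut_def)
  qed
  then show ?thesis using h by (simp add: auto_def Bij_def inner_aut_def)
qed

lemma auto_mult:
  assumes "a \<in> auto M" "b \<in> auto M"
  shows "a \<otimes>\<^bsub>AutoGroup M\<^esub> b = (\<lambda>y\<in>carrier M. a (b y))"
  using assms by (simp add: AutoGroup_def BijGroup_def auto_def compose_def)

lemma auto_one: "\<one>\<^bsub>AutoGroup M\<^esub> = (\<lambda>y\<in>carrier M. y)"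
  by (simp add: AutoGroup_def BijGroup_def)

lemma auto_inv:
  assumes "group M" "a \<in> auto M"
  shows "inv\<^bsub>AutoGroup M\<^esub> a = (\<lambda>y\<in>carrier M. inv_into (carrier M) a y)"
proof -
  interpret group M by fact
  have "subgroup (auto M) (BijGroup (carrier M))" by (rule subgroup_auto)
  then have "inv\<^bsub>AutoGroup M\<^esub> a = inv\<^bsub>BijGroup (carrier M)\<^esub> a"
    unfolding AutoGroup_def using group.m_inv_consistent[OF group_BijGroup] assms(2) by blast
  also have "\<dots> = (\<lambda>y\<in>carrier M. inv_into (carrier M) a y)"
    using assms(2) by (simp add: inv_BijGroup auto_def)
  finally show ?thesis .
qed

lemma auto_carrier: "carrier (AutoGroup M) = auto M"
  by (simp add: AutoGroup_def)


lemma (in group) cancel_l: "x \<in> carrier G \<Longrightarrow> w \<in> carrier G \<Longrightarrow> x \<otimes> (inv x \<otimes> w) = w"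
  by (simp add: m_assoc[symmetric])

lemma (in group) cancel_l2: "x \<in> carrier G \<Longrightarrow> w \<in> carrier G \<Longrightarrow> inv x \<otimes> (x \<otimes> w) = w"
  by (simp add: m_assoc[symmetric])

lemma (in group) central_conj: "x \<in> carrier G \<Longrightarrow> z \<in> carrier G \<Longrightarrow> z \<otimes> x = x \<otimes> z \<Longrightarrow> x \<otimes> z \<otimes> inv x = z"
proof -
  assume a: "x \<in> carrier G" "z \<in> carrier G" "z \<otimes> x = x \<otimes> z"
  have "x \<otimes> z \<otimes> inv x = z \<otimes> x \<otimes> inv x" using a(3) by simp
  also have "\<dots> = z" using a(1,2) by (simp add: m_assoc)
  finally show ?thesis .
qed

lemma (in group) conj_eq_imp_eq:
  assumes ct: "\<forall>z\<in>carrier G. (\<forall>w\<in>carrier G. z \<otimes> w = w \<otimes> z) \<longrightarrow> z = \<one>"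
    and g: "g \<in> carrier G" and a: "a \<in> carrier G"
    and eq: "\<forall>w\<in>carrier G. inv g \<otimes> w \<otimes> g = inv a \<otimes> w \<otimes> a"
  shows "a = g"
proof -
  have "\<forall>w\<in>carrier G. (a \<otimes> inv g) \<otimes> w = w \<otimes> (a \<otimes> inv g)"
  proof
    fix w assume w: "w \<in> carrier G"
    have "(a \<otimes> inv g) \<otimes> w = a \<otimes> (inv g \<otimes> w \<otimes> g) \<otimes> inv g"
      using a g w by (simp add: m_assoc)
    also have "\<dots> = a \<otimes> (inv a \<otimes> w \<otimes> a) \<otimes> inv g" using eq w by simp
    also have "\<dots> = w \<otimes> (a \<otimes> inv g)"
      using a g w by (simp add: m_assoc cancel_l)
    finally show "(a \<otimes> inv g) \<otimes> w = w \<otimes> (a \<otimes> inv g)" .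
  qed
  then have "a \<otimes> inv g = \<one>" using ct[rule_format, of "a \<otimes> inv g"] a g by blast
  then have "inv (inv g) = a" using inv_equality[of a "inv g"] a g by simp
  then show ?thesis using g by simp
qed

lemma hom_sub:
  assumes "f \<in> hom M (G\<lparr>carrier := K\<rparr>)" "K \<subseteq> carrier G"
  shows "f \<in> hom M G"
proof (rule homI)
  fix x assume "x \<in> carrier M"
  then have "f x \<in> K" using hom_in_carrier[OF assms(1)] by simp
  then show "f x \<in> carrier G" using assms(2) by blast
next
  fix x y assume "x \<in> carrier M" "y \<in> carrier M"
  then show "f (x \<otimes>\<^bsub>M\<^esub> y) = f x \<otimes>\<^bsub>G\<^esub> f y" using hom_mult[OF assms(1)] by simp
qed

locale ctx = group +
  fixes H :: "'a set"
  assumes sub: "subgroup H G" and sH: "simple_grp (G\<lparr>carrier := H\<rparr>)"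
    and sG: "simple_grp G" and ch: "co_hopfian G"
begin

abbreviation HH where "HH \<equiv> G\<lparr>carrier := H\<rparr>"

definition extends where "extends \<phi> \<psi> \<longleftrightarrow> \<psi> \<in> hom G G \<and> (\<forall>h\<in>H. \<psi> h = \<phi> h)"

lemma HH_group: "group HH"
  using subgroup.subgroup_is_group[OF sub is_group] .

lemma H_sub: "H \<subseteq> carrier G"
  using sub subgroup.subset by blast

lemma one_H: "\<one> \<in> H"
  using sub subgroup.one_closed by blast

lemma H_nontriv: "\<exists>h\<in>H. h \<noteq> \<one>"
  using sH one_H by (auto simp: simple_grp_def)

lemma hom_HH_G: "f \<in> hom HH HH \<Longrightarrow> f \<in> hom HH G"
  using H_sub by (auto simp: hom_def)

lemma hom_dichG: "\<psi> \<in> hom G G \<Longrightarrow> (\<forall>x\<in>carrier G. \<psi> x = \<one>) \<or> inj_on \<psi> (carrier G)"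
  using simple_dich[OF sG is_group] by blast

lemma hom_dichH: "\<phi> \<in> hom HH G \<Longrightarrow> (\<forall>x\<in>H. \<phi> x = \<one>) \<or> inj_on \<phi> H"
  using simple_dich[OF sH is_group] by simp

lemma nontriv_auto:
  assumes "\<psi> \<in> hom G G" "h \<in> H" "\<psi> h \<noteq> \<one>"
  shows "inj_on \<psi> (carrier G)" "bij_betw \<psi> (carrier G) (carrier G)"
    "restrict \<psi> (carrier G) \<in> auto G"
proof -
  show i: "inj_on \<psi> (carrier G)" using hom_dichG[OF assms(1)] assms H_sub by blast
  show "bij_betw \<psi> (carrier G) (carrier G)" "restrict \<psi> (carrier G) \<in> auto G"
    using cohop_auto[OF is_group ch assms(1) i] by auto
qed


lemma loc_unique:
  assumes loc: "localization_incl G H" and "\<phi> \<in> hom HH G" "extends \<phi> \<psi>1" "extends \<phi> \<psi>2"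
  shows "\<forall>x\<in>carrier G. \<psi>1 x = \<psi>2 x"
proof -
  obtain \<psi> where "\<psi> \<in> hom G G" and U: "\<forall>\<psi>'\<in>hom G G. (\<forall>h\<in>H. \<psi>' h = \<phi> h) \<longrightarrow> (\<forall>x\<in>carrier G. \<psi>' x = \<psi> x)"
    using loc assms(2) unfolding localization_incl_def by blast
  then show ?thesis using assms(3,4) unfolding extends_def by metis
qed

lemma loc_ex:
  assumes loc: "localization_incl G H" and "\<phi> \<in> hom HH G"
  shows "\<exists>\<psi>. extends \<phi> \<psi>"
  using loc assms(2) unfolding localization_incl_def extends_def by blast

lemma loc_cond3:
  assumes loc: "localization_incl G H" and a: "\<alpha> \<in> auto G" "\<forall>h \<in> H. \<alpha> h = h"
  shows "\<alpha> = (\<lambda>x \<in> carrier G. x)"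
proof -
  have idh: "(\<lambda>h. h) \<in> hom HH G" using H_sub by (auto simp: hom_def)
  have e1: "extends (\<lambda>h. h) \<alpha>" using a by (simp add: extends_def auto_def)
  have e2: "extends (\<lambda>h. h) (\<lambda>x \<in> carrier G. x)" using H_sub
    by (auto simp: extends_def hom_def)
  have "\<forall>x\<in>carrier G. \<alpha> x = x" using loc_unique[OF loc idh e1 e2] by simp
  moreover have "\<alpha> \<in> extensional (carrier G)" using a by (simp add: auto_def Bij_def)
  ultimately show ?thesis by (intro extensionalityI[where A="carrier G"]) auto
qed

lemma loc_cond2:
  assumes loc: "localization_incl G H" and K: "subgroup K G" "G\<lparr>carrier := K\<rparr> \<cong> HH"
  shows "\<exists>\<beta> \<in> auto G. \<beta> ` K = H"
proof -
  have gK: "group (G\<lparr>carrier := K\<rparr>)" using subgroup.subgroup_is_group[OF K(1) is_group] .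
  have "HH \<cong> G\<lparr>carrier := K\<rparr>" using group.iso_sym[OF gK K(2)] .
  then obtain g where g: "g \<in> iso HH (G\<lparr>carrier := K\<rparr>)" by (auto simp: is_iso_def)
  have KG: "K \<subseteq> carrier G" using K(1) subgroup.subset by blast
  have gh0: "g \<in> hom HH (G\<lparr>carrier := K\<rparr>)" using g unfolding iso_def by blast
  have gh: "g \<in> hom HH G" using hom_sub[OF gh0 KG] .
  have gb: "bij_betw g H K" using g unfolding iso_def by simp
  obtain \<psi> where e: "extends g \<psi>" using loc_ex[OF loc gh] by blast
  obtain h where h: "h \<in> H" "h \<noteq> \<one>" using H_nontriv by blast
  have g1: "g \<one> = \<one>"
    using hom_one[OF gh HH_group is_group] by simp
  have "\<psi> h \<noteq> \<one>"
  proof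
    assume "\<psi> h = \<one>"
    then have "g h = g \<one>" using e h g1 by (simp add: extends_def)
    then show False using gb h one_H by (auto simp: bij_betw_def inj_on_def)
  qed
  then have \<psi>: "\<psi> \<in> hom G G" "inj_on \<psi> (carrier G)" "bij_betw \<psi> (carrier G) (carrier G)"
    using nontriv_auto[of \<psi> h] e h by (auto simp: extends_def)
  define \<beta> where "\<beta> = restrict (inv_into (carrier G) \<psi>) (carrier G)"
  have ir: "inv_into (carrier G) (restrict \<psi> (carrier G)) = inv_into (carrier G) \<psi>"
    unfolding inv_into_def by (rule ext, rule arg_cong[where f=Eps]) auto
  have "restrict \<psi> (carrier G) \<in> hom G G" "restrict \<psi> (carrier G) \<in> Bij (carrier G)"
    using nontriv_auto[of \<psi> h] e h \<open>\<psi> h \<noteq> \<one>\<close> by (auto simp: extends_def auto_def)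
  then have "\<beta> \<in> hom G G"
    unfolding \<beta>_def using restrict_inv_into_hom ir by metis
  moreover have "\<beta> \<in> Bij (carrier G)"
    unfolding \<beta>_def Bij_def using bij_betw_inv_into[OF \<psi>(3)] by simp
  ultimately have ba: "\<beta> \<in> auto G" by (simp add: auto_def)
  have "\<psi> ` H = g ` H" using e unfolding extends_def by (intro image_cong) auto
  then have "\<psi> ` H = K" using gb bij_betw_imp_surj_on by metis
  then have "\<beta> ` K = \<beta> ` \<psi> ` H" by simp
  also have "\<dots> = (\<lambda>h. h) ` H"
    unfolding image_image
  proof (rule image_cong)
    fix x assume x: "x \<in> H"
    then have xG: "x \<in> carrier G" using H_sub by blast
    then have "\<psi> x \<in> carrier G" using \<psi>(1) by (rule hom_in_carrier[rotated])
    then show "\<beta> (\<psi> x) = x" unfolding \<beta>_def using inv_into_f_f[OF \<psi>(2) xG] by simp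
  qed simp
  also have "\<dots> = H" by simp
  finally show ?thesis using ba by blast
qed

definition E where "E \<alpha> = (SOME \<psi>. extends \<alpha> \<psi>)"
definition jj where "jj \<alpha> = restrict (E \<alpha>) (carrier G)"

lemma auto_HH_hom: "\<alpha> \<in> auto HH \<Longrightarrow> \<alpha> \<in> hom HH G"
  using hom_HH_G by (simp add: auto_def)

lemma E_ext:
  assumes loc: "localization_incl G H" and "\<alpha> \<in> hom HH G"
  shows "extends \<alpha> (E \<alpha>)"
  unfolding E_def using loc_ex[OF assms] by (rule someI_ex)

lemma E_unique:
  assumes loc: "localization_incl G H" and "\<alpha> \<in> hom HH G" "\<psi> \<in> hom G G" "\<forall>h\<in>H. \<psi> h = \<alpha> h"
  shows "\<forall>x\<in>carrier G. E \<alpha> x = \<psi> x"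
  using loc_unique[OF loc assms(2) E_ext[OF loc assms(2)]] assms(3,4) by (simp add: extends_def)

lemma jj_auto:
  assumes loc: "localization_incl G H" and a: "\<alpha> \<in> auto HH"
  shows "jj \<alpha> \<in> auto G"
proof -
  have ah: "\<alpha> \<in> hom HH G" using auto_HH_hom[OF a] .
  have e: "extends \<alpha> (E \<alpha>)" using E_ext[OF loc ah] .
  obtain h where h: "h \<in> H" "h \<noteq> \<one>" using H_nontriv by blast
  have a1: "\<alpha> \<one> = \<one>" using hom_one[OF ah HH_group is_group] by simp
  have ai: "inj_on \<alpha> H" using a by (simp add: auto_def Bij_def bij_betw_def)
  have "\<alpha> h \<noteq> \<one>" using ai h one_H a1 by (metis inj_onD)
  then have "E \<alpha> h \<noteq> \<one>" using e h by (simp add: extends_def)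
  then show ?thesis using nontriv_auto(3)[of "E \<alpha>" h] e h by (simp add: extends_def jj_def)
qed

lemma jj_on_H:
  assumes loc: "localization_incl G H" and a: "\<alpha> \<in> hom HH G" and h: "h \<in> H"
  shows "jj \<alpha> h = \<alpha> h"
  using E_ext[OF loc a] h H_sub by (auto simp: extends_def jj_def)

lemma loc_cond1:
  assumes loc: "localization_incl G H"
  shows "\<exists>j \<in> hom (AutoGroup HH) (AutoGroup G).
        inj_on j (auto HH) \<and> (\<forall>h \<in> H. j (inner_aut HH h) = inner_aut G h)"
proof (intro bexI conjI)
  show "jj \<in> hom (AutoGroup HH) (AutoGroup G)"
  proof (rule homI)
    fix \<alpha> assume "\<alpha> \<in> carrier (AutoGroup HH)"
    then show "jj \<alpha> \<in> carrier (AutoGroup G)" using jj_auto[OF loc] by (simp add: auto_carrier)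
  next
    fix \<alpha> \<beta> assume "\<alpha> \<in> carrier (AutoGroup HH)" "\<beta> \<in> carrier (AutoGroup HH)"
    then have a: "\<alpha> \<in> auto HH" and b: "\<beta> \<in> auto HH" by (simp_all add: auto_carrier)
    have ab: "\<alpha> \<otimes>\<^bsub>AutoGroup HH\<^esub> \<beta> \<in> auto HH"
      using monoid.m_closed[OF group.is_monoid[OF group.AutoGroup[OF HH_group]]] a b by (simp add: auto_carrier)
    have abe: "\<alpha> \<otimes>\<^bsub>AutoGroup HH\<^esub> \<beta> = (\<lambda>y\<in>H. \<alpha> (\<beta> y))"
      using auto_mult[OF a b] by simp
    have ea: "extends \<alpha> (E \<alpha>)" "extends \<beta> (E \<beta>)"
      using E_ext[OF loc auto_HH_hom] a b by auto
    have c: "E \<alpha> \<circ> E \<beta> \<in> hom G G" using ea Group.hom_compose by (auto simp: extends_def)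
    have bH: "\<beta> h \<in> H" if "h \<in> H" for h
      using b that by (auto simp: auto_def hom_def)
    have agree: "\<forall>h\<in>H. (E \<alpha> \<circ> E \<beta>) h = (\<alpha> \<otimes>\<^bsub>AutoGroup HH\<^esub> \<beta>) h"
      using ea bH by (simp add: abe extends_def)
    have U: "\<forall>x\<in>carrier G. E (\<alpha> \<otimes>\<^bsub>AutoGroup HH\<^esub> \<beta>) x = (E \<alpha> \<circ> E \<beta>) x"
      using E_unique[OF loc auto_HH_hom[OF ab] c agree] .
    have ja: "jj \<alpha> \<in> auto G" "jj \<beta> \<in> auto G" using jj_auto[OF loc] a b by auto
    have inC: "E \<beta> x \<in> carrier G" if "x \<in> carrier G" for x
      using ea(2) that hom_in_carrier by (auto simp: extends_def)
    show "jj (\<alpha> \<otimes>\<^bsub>AutoGroup HH\<^esub> \<beta>) = jj \<alpha> \<otimes>\<^bsub>AutoGroup G\<^esub> jj \<beta>"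
      unfolding auto_mult[OF ja] using U inC by (auto simp: jj_def intro!: ext)
  qed
next
  show "inj_on jj (auto HH)"
  proof (rule inj_onI)
    fix \<alpha> \<beta> assume a: "\<alpha> \<in> auto HH" and b: "\<beta> \<in> auto HH" and eq: "jj \<alpha> = jj \<beta>"
    have "\<forall>h\<in>H. \<alpha> h = \<beta> h"
      using jj_on_H[OF loc auto_HH_hom[OF a]] jj_on_H[OF loc auto_HH_hom[OF b]] eq by metis
    moreover have "\<alpha> \<in> extensional H" "\<beta> \<in> extensional H"
      using a b by (simp_all add: auto_def Bij_def)
    ultimately show "\<alpha> = \<beta>" by (intro extensionalityI[where A=H]) auto
  qed
next
  show "\<forall>h \<in> H. jj (inner_aut HH h) = inner_aut G h"
  proof
    fix h assume h: "h \<in> H"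
    have ia: "inner_aut HH h \<in> auto HH"
      using group.inner_aut_auto[OF HH_group] h by simp
    have ig: "inner_aut G h \<in> hom G G"
      using inner_aut_auto h H_sub by (auto simp: auto_def)
    have agree: "\<forall>y\<in>H. inner_aut G h y = inner_aut HH h y"
      using h H_sub m_inv_consistent[OF sub h] by (auto simp: inner_aut_def)
    have "\<forall>x\<in>carrier G. E (inner_aut HH h) x = inner_aut G h x"
      using E_unique[OF loc auto_HH_hom[OF ia] ig agree] .
    then show "jj (inner_aut HH h) = inner_aut G h"
      by (auto simp: jj_def inner_aut_def intro!: ext)
  qed
qed

lemma center_trivial:
  assumes ne: "H \<noteq> carrier G"
  shows "\<forall>z\<in>carrier G. (\<forall>w\<in>carrier G. z \<otimes> w = w \<otimes> z) \<longrightarrow> z = \<one>"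
proof -
  define Z where "Z = {z\<in>carrier G. \<forall>w\<in>carrier G. z \<otimes> w = w \<otimes> z}"
  have Zc1: "z \<in> carrier G" if "z \<in> Z" for z
    using that unfolding Z_def by blast
  have Zc2: "z \<otimes> w = w \<otimes> z" if "z \<in> Z" "w \<in> carrier G" for z w
    using that unfolding Z_def by blast
  have ZI: "z \<in> Z" if "z \<in> carrier G" "\<And>w. w \<in> carrier G \<Longrightarrow> z \<otimes> w = w \<otimes> z" for z
    using that unfolding Z_def by blast
  have sZ: "subgroup Z G"
  proof (rule subgroupI)
    show "Z \<subseteq> carrier G" using Zc1 by blast
    have "\<one> \<in> Z" by (rule ZI) simp_all
    then show "Z \<noteq> {}" by blast
  next
    fix a assume a: "a \<in> Z"
    have aG: "a \<in> carrier G" using Zc1[OF a] .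
    show "inv a \<in> Z"
    proof (rule ZI)
      show "inv a \<in> carrier G" using aG by simp
      fix w assume w: "w \<in> carrier G"
      have "inv a \<otimes> w = inv a \<otimes> (w \<otimes> a) \<otimes> inv a" using aG w by (simp add: m_assoc)
      also have "\<dots> = inv a \<otimes> (a \<otimes> w) \<otimes> inv a" using Zc2[OF a w] by simp
      also have "\<dots> = w \<otimes> inv a" using aG w by (simp add: m_assoc cancel_l2)
      finally show "inv a \<otimes> w = w \<otimes> inv a" .
    qed
  next
    fix a b assume a: "a \<in> Z" and b: "b \<in> Z"
    have ab: "a \<in> carrier G" "b \<in> carrier G" using Zc1 a b by blast+
    show "a \<otimes> b \<in> Z"
    proof (rule ZI)
      show "a \<otimes> b \<in> carrier G" using ab by simp
      fix w assume w: "w \<in> carrier G"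
      have "(a \<otimes> b) \<otimes> w = a \<otimes> (b \<otimes> w)" using ab w by (simp add: m_assoc)
      also have "\<dots> = a \<otimes> (w \<otimes> b)" using Zc2[OF b w] by simp
      also have "\<dots> = (a \<otimes> w) \<otimes> b" using ab w by (simp add: m_assoc)
      also have "\<dots> = (w \<otimes> a) \<otimes> b" using Zc2[OF a w] by simp
      also have "\<dots> = w \<otimes> (a \<otimes> b)" using ab w by (simp add: m_assoc)
      finally show "(a \<otimes> b) \<otimes> w = w \<otimes> (a \<otimes> b)" .
    qed
  qed
  have "Z \<lhd> G" unfolding normal_inv_iff
  proof (intro conjI ballI)
    show "subgroup Z G" by (rule sZ)
    fix x z assume x: "x \<in> carrier G" and z: "z \<in> Z"
    have "x \<otimes> z \<otimes> inv x = z" using central_conj[OF x Zc1[OF z] Zc2[OF z x]] .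
    then show "x \<otimes> z \<otimes> inv x \<in> Z" using z by simp
  qed
  then have "Z = carrier G \<or> Z = {\<one>}" using sG unfolding simple_grp_def by blast
  moreover have "Z \<noteq> carrier G"
  proof
    assume Zc: "Z = carrier G"
    have "H \<lhd> G" unfolding normal_inv_iff
    proof (intro conjI ballI)
      show "subgroup H G" by (rule sub)
      fix x h assume x: "x \<in> carrier G" and h: "h \<in> H"
      have hZ: "h \<in> Z" using h H_sub Zc by blast
      have "x \<otimes> h \<otimes> inv x = h" using central_conj[OF x Zc1[OF hZ] Zc2[OF hZ x]] .
      then show "x \<otimes> h \<otimes> inv x \<in> H" using h by simp
    qed
    then have "H = carrier G \<or> H = {\<one>}" using sG unfolding simple_grp_def by blast
    then show False using ne H_nontriv by blast
  qed
  ultimately have Z1: "Z = {\<one>}" by blast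
  show ?thesis
  proof (intro ballI impI)
    fix z assume "z \<in> carrier G" "\<forall>w\<in>carrier G. z \<otimes> w = w \<otimes> z"
    then have "z \<in> Z" using ZI by blast
    then show "z = \<one>" using Z1 by blast
  qed
qed

lemma uniq2:
  assumes C3: "\<forall>\<alpha> \<in> auto G. (\<forall>h \<in> H. \<alpha> h = h) \<longrightarrow> \<alpha> = (\<lambda>x \<in> carrier G. x)"
    and e1: "extends \<phi> \<psi>1" and e2: "extends \<phi> \<psi>2"
  shows "\<forall>x\<in>carrier G. \<psi>1 x = \<psi>2 x"
proof (cases "\<forall>h\<in>H. \<phi> h = \<one>")
  case True
  have triv: "\<forall>x\<in>carrier G. \<psi> x = \<one>" if e: "extends \<phi> \<psi>" for \<psi>
  proof -
    have ps: "\<psi> \<in> hom G G" using e by (simp add: extends_def)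
    obtain h where h: "h \<in> H" "h \<noteq> \<one>" using H_nontriv by blast
    have "\<psi> h = \<psi> \<one>" using e True h hom_one[OF ps is_group is_group] one_H
      by (simp add: extends_def)
    then have "\<not> inj_on \<psi> (carrier G)" using h H_sub by (auto simp: inj_on_def)
    then show ?thesis using hom_dichG[OF ps] by blast
  qed
  show ?thesis using triv[OF e1] triv[OF e2] by simp
next
  case False
  then obtain h where h: "h \<in> H" "\<phi> h \<noteq> \<one>" by blast
  have a1: "restrict \<psi>1 (carrier G) \<in> auto G" and a2: "restrict \<psi>2 (carrier G) \<in> auto G"
    using nontriv_auto(3) e1 e2 h by (auto simp: extends_def)
  have i2: "inj_on \<psi>2 (carrier G)" using nontriv_auto(1) e2 h by (auto simp: extends_def)
  define A where "A = AutoGroup G"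
  have gA: "group A" unfolding A_def by (rule AutoGroup)
  let ?a1 = "restrict \<psi>1 (carrier G)" and ?a2 = "restrict \<psi>2 (carrier G)"
  have ia2: "inv\<^bsub>A\<^esub> ?a2 \<in> auto G"
    using group.inv_closed[OF gA] a2 by (simp add: A_def auto_carrier)
  define \<theta> where "\<theta> = inv\<^bsub>A\<^esub> ?a2 \<otimes>\<^bsub>A\<^esub> ?a1"
  have th: "\<theta> \<in> auto G" using monoid.m_closed[OF group.is_monoid[OF gA]] ia2 a1
    by (simp add: \<theta>_def A_def auto_carrier)
  have "\<forall>k\<in>H. \<theta> k = k"
  proof
    fix k assume k: "k \<in> H"
    have kG: "k \<in> carrier G" using k H_sub by auto
    have "\<psi>1 k = \<psi>2 k" using e1 e2 k by (simp add: extends_def)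
    moreover have "\<psi>2 k \<in> carrier G" using e2 kG hom_in_carrier by (auto simp: extends_def)
    moreover have "\<theta> = (\<lambda>y\<in>carrier G. (inv\<^bsub>A\<^esub> ?a2) (?a1 y))"
      using auto_mult[OF ia2[unfolded A_def] a1] by (simp add: \<theta>_def A_def)
    moreover have "inv\<^bsub>A\<^esub> ?a2 = (\<lambda>y\<in>carrier G. inv_into (carrier G) ?a2 y)"
      using auto_inv[OF is_group a2] by (simp add: A_def)
    moreover have "inj_on ?a2 (carrier G)" using i2 by (simp add: inj_on_def)
    then have "inv_into (carrier G) ?a2 (?a2 k) = k" using kG by (rule inv_into_f_f)
    then have "inv_into (carrier G) ?a2 (\<psi>2 k) = k" using kG by simp
    ultimately show "\<theta> k = k"
      using kG by simp
  qed
  then have "\<theta> = \<one>\<^bsub>A\<^esub>" using C3 th by (simp add: A_def auto_one)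
  moreover have "?a2 \<otimes>\<^bsub>A\<^esub> \<theta> = ?a1"
    unfolding \<theta>_def using group.cancel_l[OF gA] a1 a2 by (simp add: A_def auto_carrier)
  ultimately have "?a1 = ?a2"
    using monoid.r_one[OF group.is_monoid[OF gA]] a2 by (simp add: A_def auto_carrier)
  then show ?thesis by (metis restrict_apply')
qed

lemma ex2:
  assumes C1: "\<exists>j \<in> hom (AutoGroup HH) (AutoGroup G).
        inj_on j (auto HH) \<and> (\<forall>h \<in> H. j (inner_aut HH h) = inner_aut G h)"
    and C2: "\<forall>K. subgroup K G \<and> G\<lparr>carrier := K\<rparr> \<cong> HH \<longrightarrow> (\<exists>\<beta> \<in> auto G. \<beta> ` K = H)"
    and ne: "H \<noteq> carrier G" and ph: "\<phi> \<in> hom HH G"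
  shows "\<exists>\<psi>. extends \<phi> \<psi>"
proof (cases "\<forall>h\<in>H. \<phi> h = \<one>")
  case True
  have "(\<lambda>x. \<one>) \<in> hom G G" by (rule homI) simp_all
  then show ?thesis using True by (auto simp: extends_def)
next
  case False
  then obtain h0 where h0: "h0 \<in> H" "\<phi> h0 \<noteq> \<one>" by blast
  have inj\<phi>: "inj_on \<phi> H" using hom_dichH[OF ph] h0 by blast
  obtain j where jh: "j \<in> hom (AutoGroup HH) (AutoGroup G)"
    and jc: "\<forall>h \<in> H. j (inner_aut HH h) = inner_aut G h" using C1 by blast
  interpret gh: group_hom HH G \<phi> using HH_group is_group ph
    by (simp add: group_hom_def group_hom_axioms_def)
  define K where "K = \<phi> ` H"
  have sK: "subgroup K G" unfolding K_def
    using gh.subgroup_img_is_subgroup[OF group.subgroup_self[OF HH_group]] by simp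
  have KG: "K \<subseteq> carrier G" using sK subgroup.subset by blast
  have "\<phi> \<in> hom HH (G\<lparr>carrier := K\<rparr>)"
  proof (rule homI)
    fix x assume "x \<in> carrier HH" then show "\<phi> x \<in> carrier (G\<lparr>carrier := K\<rparr>)"
      unfolding K_def by simp
  next
    fix x y assume "x \<in> carrier HH" "y \<in> carrier HH"
    then show "\<phi> (x \<otimes>\<^bsub>HH\<^esub> y) = \<phi> x \<otimes>\<^bsub>G\<lparr>carrier := K\<rparr>\<^esub> \<phi> y"
      using hom_mult[OF ph] by simp
  qed
  moreover have "bij_betw \<phi> H K" unfolding K_def bij_betw_def using inj\<phi> by simp
  ultimately have "\<phi> \<in> iso HH (G\<lparr>carrier := K\<rparr>)" unfolding iso_def by simp
  then have "HH \<cong> G\<lparr>carrier := K\<rparr>" by (auto simp: is_iso_def)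
  then have "G\<lparr>carrier := K\<rparr> \<cong> HH" using group.iso_sym[OF HH_group] by blast
  then obtain \<beta> where \<beta>: "\<beta> \<in> auto G" "\<beta> ` K = H" using C2 sK by blast
  have \<beta>h: "\<beta> \<in> hom G G" and \<beta>b: "bij_betw \<beta> (carrier G) (carrier G)"
    using \<beta> unfolding auto_def Bij_def by blast+
  have \<beta>i: "inj_on \<beta> (carrier G)" using \<beta>b by (simp add: bij_betw_def)
  have \<phi>G: "\<phi> h \<in> carrier G" if "h \<in> H" for h using ph that hom_in_carrier by fastforce
  define \<alpha> where "\<alpha> = (\<lambda>h\<in>H. \<beta> (\<phi> h))"
  have \<alpha>H: "\<alpha> h \<in> H" if "h \<in> H" for h
    using \<beta>(2) that unfolding \<alpha>_def K_def by auto
  have \<alpha>hom: "\<alpha> \<in> hom HH HH"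
  proof (rule homI)
    fix x assume "x \<in> carrier HH" then show "\<alpha> x \<in> carrier HH" using \<alpha>H by simp
  next
    fix x y assume xy: "x \<in> carrier HH" "y \<in> carrier HH"
    then have "x \<otimes> y \<in> H" using sub subgroup.m_closed by fastforce
    moreover have "\<phi> (x \<otimes> y) = \<phi> x \<otimes> \<phi> y" using hom_mult[OF ph] xy by simp
    moreover have "\<beta> (\<phi> x \<otimes> \<phi> y) = \<beta> (\<phi> x) \<otimes> \<beta> (\<phi> y)"
      using hom_mult[OF \<beta>h] \<phi>G xy by simp
    ultimately show "\<alpha> (x \<otimes>\<^bsub>HH\<^esub> y) = \<alpha> x \<otimes>\<^bsub>HH\<^esub> \<alpha> y"
      using xy unfolding \<alpha>_def by simp
  qed
  have "bij_betw \<alpha> H H"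
  proof -
    have "bij_betw \<phi> H K" using inj\<phi> by (simp add: K_def bij_betw_def)
    moreover have "bij_betw \<beta> K H" using \<beta>(2) \<beta>i KG by (simp add: bij_betw_def inj_on_subset)
    ultimately have "bij_betw (\<beta> \<circ> \<phi>) H H" by (rule bij_betw_trans)
    then show ?thesis unfolding \<alpha>_def by (simp add: comp_def)
  qed
  moreover have "\<alpha> \<in> extensional H" unfolding \<alpha>_def by simp
  ultimately have \<alpha>a: "\<alpha> \<in> auto HH" using \<alpha>hom unfolding auto_def Bij_def by simp
  define \<gamma> where "\<gamma> = j \<alpha>"
  have \<gamma>a: "\<gamma> \<in> auto G" using hom_in_carrier[OF jh] \<alpha>a unfolding \<gamma>_def by (simp add: auto_carrier)
  have \<gamma>h: "\<gamma> \<in> hom G G" and \<gamma>b: "bij_betw \<gamma> (carrier G) (carrier G)"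
    using \<gamma>a unfolding auto_def Bij_def by blast+
  interpret g\<gamma>: group_hom G G \<gamma> using \<gamma>h is_group by (simp add: group_hom_def group_hom_axioms_def)
  interpret g\<alpha>: group_hom HH G \<alpha> using HH_group is_group hom_HH_G[OF \<alpha>hom]
    by (simp add: group_hom_def group_hom_axioms_def)
  have ct: "\<forall>z\<in>carrier G. (\<forall>w\<in>carrier G. z \<otimes> w = w \<otimes> z) \<longrightarrow> z = \<one>"
    using center_trivial[OF ne] .
  have key: "\<gamma> h = \<alpha> h" if h: "h \<in> H" for h
  proof -
    have hG: "h \<in> carrier G" using h H_sub by auto
    define a where "a = \<alpha> h"
    have aH: "a \<in> H" using \<alpha>H h a_def by simp
    have aG: "a \<in> carrier G" using aH H_sub by auto
    have c: "inner_aut HH h \<in> auto HH" "inner_aut HH a \<in> auto HH"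
      using group.inner_aut_auto[OF HH_group] h aH by auto
    have eqH: "\<alpha> \<otimes>\<^bsub>AutoGroup HH\<^esub> inner_aut HH h = inner_aut HH a \<otimes>\<^bsub>AutoGroup HH\<^esub> \<alpha>"
    proof -
      have "\<alpha> (inner_aut HH h y) = inner_aut HH a (\<alpha> y)" if y: "y \<in> H" for y
      proof -
        have yG: "y \<in> carrier G" using y H_sub by auto
        have ih: "inv h \<in> H" using sub h subgroup.m_inv_closed by fastforce
        have m: "\<alpha> (u \<otimes> v) = \<alpha> u \<otimes> \<alpha> v" if "u \<in> H" "v \<in> H" for u v
          using hom_mult[OF hom_HH_G[OF \<alpha>hom], of u v] that by simp
        have ihy: "inv h \<otimes> y \<in> H" using subgroup.m_closed[OF sub ih y] .
        have "inner_aut HH h y = inv h \<otimes> y \<otimes> h"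
          using y h m_inv_consistent[OF sub h] by (simp add: inner_aut_def)
        moreover have "\<alpha> (inv h \<otimes> y \<otimes> h) = \<alpha> (inv h) \<otimes> \<alpha> y \<otimes> \<alpha> h"
          using m[OF ihy h] m[OF ih y] by simp
        moreover have "\<alpha> (inv h) = inv (\<alpha> h)"
          using g\<alpha>.hom_inv[of h] h m_inv_consistent[OF sub h] by simp
        moreover have "inner_aut HH a (\<alpha> y) = inv a \<otimes> \<alpha> y \<otimes> a"
          using \<alpha>H[OF y] aH m_inv_consistent[OF sub aH] by (simp add: inner_aut_def)
        ultimately show ?thesis by (simp add: a_def)
      qed
      moreover have "inner_aut HH h y \<in> H" if "y \<in> H" for y
      proof -
        have "inner_aut HH h \<in> hom HH HH" using c(1) unfolding auto_def by blast
        from hom_in_carrier[OF this, of y] that show ?thesis by simp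
      qed
      ultimately show ?thesis
        unfolding auto_mult[OF \<alpha>a c(1)] auto_mult[OF c(2) \<alpha>a] using \<alpha>H
        by (auto intro!: ext)
    qed
    have "j (\<alpha> \<otimes>\<^bsub>AutoGroup HH\<^esub> inner_aut HH h) = \<gamma> \<otimes>\<^bsub>AutoGroup G\<^esub> inner_aut G h"
      using hom_mult[OF jh] \<alpha>a c(1) jc h unfolding \<gamma>_def by (simp add: auto_carrier)
    moreover have "j (inner_aut HH a \<otimes>\<^bsub>AutoGroup HH\<^esub> \<alpha>) = inner_aut G a \<otimes>\<^bsub>AutoGroup G\<^esub> \<gamma>"
      using hom_mult[OF jh] \<alpha>a c(2) jc aH unfolding \<gamma>_def by (simp add: auto_carrier)
    ultimately have E: "\<gamma> \<otimes>\<^bsub>AutoGroup G\<^esub> inner_aut G h = inner_aut G a \<otimes>\<^bsub>AutoGroup G\<^esub> \<gamma>"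
      using eqH by simp
    have ig: "inner_aut G h \<in> auto G" "inner_aut G a \<in> auto G"
      using inner_aut_auto hG aG by auto
    have pt: "\<gamma> (inv h \<otimes> x \<otimes> h) = inv a \<otimes> \<gamma> x \<otimes> a" if x: "x \<in> carrier G" for x
    proof -
      have "(\<gamma> \<otimes>\<^bsub>AutoGroup G\<^esub> inner_aut G h) x = (inner_aut G a \<otimes>\<^bsub>AutoGroup G\<^esub> \<gamma>) x"
        using E by simp
      then show ?thesis
        unfolding auto_mult[OF \<gamma>a ig(1)] auto_mult[OF ig(2) \<gamma>a] using x hG aG
        by (simp add: inner_aut_def)
    qed
    have "\<forall>w\<in>carrier G. inv (\<gamma> h) \<otimes> w \<otimes> \<gamma> h = inv a \<otimes> w \<otimes> a"
    proof
      fix w assume w: "w \<in> carrier G"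
      have "w \<in> \<gamma> ` carrier G" using \<gamma>b w unfolding bij_betw_def by simp
      then obtain x where x: "x \<in> carrier G" "w = \<gamma> x" by blast
      have "\<gamma> (inv h \<otimes> x \<otimes> h) = inv (\<gamma> h) \<otimes> \<gamma> x \<otimes> \<gamma> h"
        using x hG by simp
      then show "inv (\<gamma> h) \<otimes> w \<otimes> \<gamma> h = inv a \<otimes> w \<otimes> a" using pt[OF x(1)] x by simp
    qed
    then have "a = \<gamma> h" using conj_eq_imp_eq[OF ct _ aG] hG by simp
    then show ?thesis by (simp add: a_def)
  qed
  define \<beta>' where "\<beta>' = restrict (inv_into (carrier G) \<beta>) (carrier G)"
  have \<beta>B: "\<beta> \<in> Bij (carrier G)" using \<beta>(1) unfolding auto_def by blast
  have "\<beta>' \<in> hom G G" unfolding \<beta>'_def using restrict_inv_into_hom[OF \<beta>h \<beta>B] .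
  then have ch: "\<beta>' \<circ> \<gamma> \<in> hom G G" using Group.hom_compose[OF \<gamma>h] by blast
  have fin: "(\<beta>' \<circ> \<gamma>) h = \<phi> h" if h: "h \<in> H" for h
  proof -
    have "\<gamma> h = \<beta> (\<phi> h)" using key[OF h] h by (simp add: \<alpha>_def)
    moreover have "\<beta> (\<phi> h) \<in> carrier G" using hom_in_carrier[OF \<beta>h \<phi>G[OF h]] .
    ultimately show ?thesis using \<phi>G[OF h] \<beta>i by (simp add: \<beta>'_def inv_into_f_f)
  qed
  then show ?thesis unfolding extends_def using ch fin by blast
qed

end

theorem theorem2p3:
  fixes G :: "('a, 'b) monoid_scheme" and H :: "'a set"
  assumes "subgroup H G"
    and "simple_grp (G\<lparr>carrier := H\<rparr>)"
    and "simple_grp G"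
    and "co_hopfian G"
  shows "localization_incl G H \<longleftrightarrow>
    (\<exists>j \<in> hom (AutoGroup (G\<lparr>carrier := H\<rparr>)) (AutoGroup G).
        inj_on j (auto (G\<lparr>carrier := H\<rparr>)) \<and>
        (\<forall>h \<in> H. j (inner_aut (G\<lparr>carrier := H\<rparr>) h) = inner_aut G h)) \<and>
    (\<forall>K. subgroup K G \<and> G\<lparr>carrier := K\<rparr> \<cong> G\<lparr>carrier := H\<rparr> \<longrightarrow>
        (\<exists>\<beta> \<in> auto G. \<beta> ` K = H)) \<and>
    (\<forall>\<alpha> \<in> auto G. (\<forall>h \<in> H. \<alpha> h = h) \<longrightarrow> \<alpha> = (\<lambda>x \<in> carrier G. x))"
proof -
  interpret c: ctx G H unfolding ctx_def ctx_axioms_def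
    using assms simple_grp_group[OF assms(3)] by blast
  show ?thesis
  proof
    assume loc: "localization_incl G H"
    show "(\<exists>j \<in> hom (AutoGroup (G\<lparr>carrier := H\<rparr>)) (AutoGroup G).
        inj_on j (auto (G\<lparr>carrier := H\<rparr>)) \<and>
        (\<forall>h \<in> H. j (inner_aut (G\<lparr>carrier := H\<rparr>) h) = inner_aut G h)) \<and>
    (\<forall>K. subgroup K G \<and> G\<lparr>carrier := K\<rparr> \<cong> G\<lparr>carrier := H\<rparr> \<longrightarrow>
        (\<exists>\<beta> \<in> auto G. \<beta> ` K = H)) \<and>
    (\<forall>\<alpha> \<in> auto G. (\<forall>h \<in> H. \<alpha> h = h) \<longrightarrow> \<alpha> = (\<lambda>x \<in> carrier G. x))"
      using c.loc_cond1[OF loc] c.loc_cond2[OF loc] c.loc_cond3[OF loc] by blast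
  next
    assume C: "(\<exists>j \<in> hom (AutoGroup (G\<lparr>carrier := H\<rparr>)) (AutoGroup G).
        inj_on j (auto (G\<lparr>carrier := H\<rparr>)) \<and>
        (\<forall>h \<in> H. j (inner_aut (G\<lparr>carrier := H\<rparr>) h) = inner_aut G h)) \<and>
    (\<forall>K. subgroup K G \<and> G\<lparr>carrier := K\<rparr> \<cong> G\<lparr>carrier := H\<rparr> \<longrightarrow>
        (\<exists>\<beta> \<in> auto G. \<beta> ` K = H)) \<and>
    (\<forall>\<alpha> \<in> auto G. (\<forall>h \<in> H. \<alpha> h = h) \<longrightarrow> \<alpha> = (\<lambda>x \<in> carrier G. x))"
    show "localization_incl G H"
      unfolding localization_incl_def
    proof
      fix \<phi> assume ph: "\<phi> \<in> hom (G\<lparr>carrier := H\<rparr>) G"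
      have "\<exists>\<psi>. c.extends \<phi> \<psi>"
      proof (cases "H = carrier G")
        case True
        have "\<phi> \<in> hom G G"
        proof (rule homI)
          fix x assume "x \<in> carrier G"
          then show "\<phi> x \<in> carrier G" using hom_in_carrier[OF ph] True by simp
        next
          fix x y assume "x \<in> carrier G" "y \<in> carrier G"
          then show "\<phi> (x \<otimes>\<^bsub>G\<^esub> y) = \<phi> x \<otimes>\<^bsub>G\<^esub> \<phi> y" using hom_mult[OF ph] True by simp
        qed
        then show ?thesis unfolding c.extends_def by blast
      next
        case False
        then show ?thesis using c.ex2 C ph by blast
      qed
      then obtain \<psi> where e: "c.extends \<phi> \<psi>" by blast
      show "\<exists>\<psi> \<in> hom G G. (\<forall>h \<in> H. \<psi> h = \<phi> h) \<and>
          (\<forall>\<psi>' \<in> hom G G. (\<forall>h \<in> H. \<psi>' h = \<phi> h) \<longrightarrow> (\<forall>x \<in> carrier G. \<psi>' x = \<psi> x))"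
      proof (intro bexI conjI ballI impI)
        show "\<psi> \<in> hom G G" using e by (simp add: c.extends_def)
        show "\<psi> h = \<phi> h" if "h \<in> H" for h using e that by (simp add: c.extends_def)
        fix \<psi>' x assume "\<psi>' \<in> hom G G" "\<forall>h \<in> H. \<psi>' h = \<phi> h" "x \<in> carrier G"
        then show "\<psi>' x = \<psi> x" using c.uniq2[of \<phi> \<psi>' \<psi>] C e by (simp add: c.extends_def)
      qed
    qed
  qed
qed

end
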